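(* Let $m,n\ge 1$, let $\mathbf{A}\in\mathbb{R}^{n\times m}$, $\bm{\mu}\in\mathbb{R}^m$, let $\mathbf{R}\in\mathbb{R}^{n\times n}$ be symmetric positive definite, and let $b>0$. Define $$\bm{\Sigma}=\left(\left(\mathbf{A}^{\top}\mathbf{R}^{-1}\mathbf{A}\right)\circ\bm{\mu}\bm{\mu}^{\top}+\tfrac{1}{b^2}\mathbf{I}_m\right)^{-1}.$$ Let $\mathbf{c}_k\sim\mathcal{N}(\mathbf{1},b^2\mathbf{I}_m)$ and $\bm{\epsilon}_k\sim\mathcal{N}(\mathbf{0},\mathbf{R})$ be independent, set $\mathbf{y}_k=\mathbf{A}\bm{\mu}+\bm{\epsilon}_k$, and define the Monte Carlo MAP estimator $$\mathbf{c}^k_{MAP}=\bm{\Sigma}\left(\left(\mathbf{A}^{\top}\mathbf{R}^{-1}\mathbf{y}_k\right)\circ\bm{\mu}+\tfrac{1}{b^2}\mathbf{c}_k\right).$$ Then $\mathrm{Cov}[\mathbf{c}^k_{MAP}]=\bm{\Sigma}$, and, with $\bm{\theta}_k=\mathbf{c}^k_{MAP}\circ\bm{\mu}$, $\mathrm{Cov}[\bm{\theta}_k]=\bm{\Sigma}\circ\bm{\mu}\bm{\mu}^{\top}$.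
   Context: $\circ$ denotes the element-wise (Hadamard) product of vectors or matrices of the same shape, and $\mathbf{1}$ is the all-ones vector. In the Bayesian model $\mathbf{c}\sim\mathcal{N}(\mathbf{c}^b,b^2\mathbf{I}_m)$, $\mathbf{y}\mid\mathbf{c}\sim\mathcal{N}(\mathbf{A}(\mathbf{c}\circ\bm{\mu}),\mathbf{R})$, the matrix $\bm{\Sigma}$ above is the posterior covariance of $\mathbf{c}$ given $\mathbf{y}$, $\mathbf{c}^k_{MAP}$ is the posterior mode (MAP estimator) obtained with prior mean $\mathbf{c}_k$ and observation $\mathbf{y}_k$, and $\bm{\Sigma}\circ\bm{\mu}\bm{\mu}^{\top}$ is the posterior covariance of $\bm{\theta}=\mathbf{c}\circ\bm{\mu}$ given $\mathbf{y}$. *)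

theory Defs
  imports "HOL-Probability.Probability"
begin

definition hadamard_vec :: "real^'m \<Rightarrow> real^'m \<Rightarrow> real^'m" where
  "hadamard_vec x y = (\<chi> i. x$i * y$i)"

definition hadamard_mat :: "real^'m^'n \<Rightarrow> real^'m^'n \<Rightarrow> real^'m^'n" where
  "hadamard_mat P Q = (\<chi> i j. P$i$j * Q$i$j)"

definition outer :: "real^'n \<Rightarrow> real^'m \<Rightarrow> real^'m^'n" where
  "outer x y = (\<chi> i j. x$i * y$j)"

definition spd :: "real^'n^'n \<Rightarrow> bool" where
  "spd R \<longleftrightarrow> transpose R = R \<and> (\<forall>x. x \<noteq> 0 \<longrightarrow> x \<bullet> (R *v x) > 0)"

definition mean_vec :: "'a measure \<Rightarrow> ('a \<Rightarrow> real^'k) \<Rightarrow> real^'k" where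
  "mean_vec M X = (\<chi> i. integral\<^sup>L M (\<lambda>\<omega>. X \<omega> $ i))"

definition cov_mat :: "'a measure \<Rightarrow> ('a \<Rightarrow> real^'k) \<Rightarrow> real^'k^'k" where
  "cov_mat M X = (\<chi> i j. integral\<^sup>L M
      (\<lambda>\<omega>. (X \<omega> $ i - mean_vec M X $ i) * (X \<omega> $ j - mean_vec M X $ j)))"

text \<open>Multivariate Gaussian N(m,S): every linear functional a.X is univariate normal
  with mean a.m and variance a.(S a) (a point mass if the variance is zero).\<close>
definition gaussian_vec :: "'a measure \<Rightarrow> ('a \<Rightarrow> real^'k) \<Rightarrow> real^'k \<Rightarrow> real^'k^'k \<Rightarrow> bool" where
  "gaussian_vec M X m S \<longleftrightarrow> X \<in> borel_measurable M \<and>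
     (\<forall>a. (if a \<bullet> (S *v a) = 0
            then (AE \<omega> in M. a \<bullet> X \<omega> = a \<bullet> m)
            else distributed M lborel (\<lambda>\<omega>. a \<bullet> X \<omega>)
                   (normal_density (a \<bullet> m) (sqrt (a \<bullet> (S *v a))))))"

end

theory Submission
  imports Defs
begin


lemma minv:
  fixes A :: "real^'n^'n"
  assumes "invertible A"
  shows "A ** matrix_inv A = mat 1" "matrix_inv A ** A = mat 1"
  using someI_ex[of "\<lambda>A'. A ** A' = mat 1 \<and> A' ** A = mat 1"] assms
  unfolding invertible_def matrix_inv_def by auto

lemma minv_sym:
  fixes A :: "real^'n^'n"
  assumes "invertible A" "transpose A = A"
  shows "transpose (matrix_inv A) = matrix_inv A"
proof -
  have "transpose (matrix_inv A) ** A = mat 1"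
    by (metis assms minv(1) matrix_transpose_mul transpose_mat)
  have "transpose (matrix_inv A) = transpose (matrix_inv A) ** A ** matrix_inv A"
    by (simp add: matrix_mul_rid minv(1)[OF assms(1)] matrix_mul_assoc[symmetric])
  also have "\<dots> = matrix_inv A"
    by (simp add: \<open>transpose (matrix_inv A) ** A = mat 1\<close> matrix_mul_lid)
  finally show ?thesis .
qed

lemma posdef_invertible:
  fixes A :: "real^'n^'n"
  assumes "\<And>x. x \<noteq> 0 \<Longrightarrow> x \<bullet> (A *v x) > 0"
  shows "invertible A"
proof -
  have "\<forall>x. A *v x = 0 \<longrightarrow> x = 0"
    using assms by (metis inner_zero_right less_irrefl)
  then show ?thesis
    using matrix_left_invertible_ker invertible_left_inverse by blast
qed

lemma row_mult: "(P *v x) $ i = row i P \<bullet> (x::real^'n)"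
  by (simp add: matrix_vector_mult_def inner_vec_def row_def mult.commute)

lemma row_quad:
  fixes P :: "real^'n^'m" and S :: "real^'n^'n"
  shows "row i P \<bullet> (S *v row j P) = (P ** S ** transpose P) $ i $ j"
proof -
  have "row i P \<bullet> (S *v row j P) = (\<Sum>l\<in>UNIV. \<Sum>k\<in>UNIV. P$i$l * S$l$k * P$j$k)"
    by (simp add: matrix_vector_mult_def inner_vec_def row_def sum_distrib_left mult.assoc)
  also have "\<dots> = (\<Sum>k\<in>UNIV. \<Sum>l\<in>UNIV. P$i$l * S$l$k * P$j$k)"
    by (rule sum.swap)
  also have "\<dots> = (P ** S ** transpose P) $ i $ j"
    by (simp add: matrix_matrix_mult_def transpose_def sum_distrib_right)
  finally show ?thesis .
qed

lemma dot_transpose: "(x::real^'n) \<bullet> (transpose B *v y) = (B *v x) \<bullet> y"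
proof -
  have "x \<bullet> (transpose B *v y) = (\<Sum>l\<in>UNIV. \<Sum>k\<in>UNIV. x$l * B$k$l * y$k)"
    by (simp add: matrix_vector_mult_def inner_vec_def transpose_def sum_distrib_left mult_ac)
  also have "\<dots> = (\<Sum>k\<in>UNIV. \<Sum>l\<in>UNIV. x$l * B$k$l * y$k)"
    by (rule sum.swap)
  also have "\<dots> = (B *v x) \<bullet> y"
    by (simp add: matrix_vector_mult_def inner_vec_def sum_distrib_left mult_ac)
  finally show ?thesis .
qed



lemma uni:
  fixes Y :: "'a \<Rightarrow> real"
  assumes P: "prob_space M" and Ym: "Y \<in> borel_measurable M" and v: "v \<ge> 0"
    and D: "if v = 0 then (AE \<omega> in M. Y \<omega> = m) else distributed M lborel Y (normal_density m (sqrt v))"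
  shows "integrable M Y \<and> integral\<^sup>L M Y = m \<and> integrable M (\<lambda>\<omega>. (Y \<omega> - m)^2)
       \<and> integral\<^sup>L M (\<lambda>\<omega>. (Y \<omega> - m)^2) = v"
proof (cases "v = 0")
  case True
  interpret prob_space M by fact
  have ae: "AE \<omega> in M. Y \<omega> = m" using D True by simp
  have i1: "integrable M Y"
    using integrable_cong_AE[OF Ym _ ae] by simp
  have e1: "integral\<^sup>L M Y = m"
    using integral_cong_AE[OF Ym _ ae] by (simp add: prob_space)
  have ae2: "AE \<omega> in M. (Y \<omega> - m)^2 = 0" using ae by auto
  have i2: "integrable M (\<lambda>\<omega>. (Y \<omega> - m)^2)"
    using integrable_cong_AE[OF _ _ ae2] Ym by simp
  have e2: "integral\<^sup>L M (\<lambda>\<omega>. (Y \<omega> - m)^2) = 0"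
    using integral_cong_AE[OF _ _ ae2] Ym by simp
  show ?thesis using i1 e1 i2 e2 True by simp
next
  case False
  interpret prob_space M by fact
  have s: "sqrt v > 0" using v False by simp
  have D': "distributed M lborel Y (normal_density m (sqrt v))" using D False by simp
  have i1: "integrable M Y"
    using distributed_integrable[OF D', of "\<lambda>x. x"] integrable_normal_moment_nz_1[OF s, of m] by simp
  have e1: "integral\<^sup>L M Y = m"
    using normal_distributed_expectation[OF s D'] .
  have i2: "integrable M (\<lambda>\<omega>. (Y \<omega> - m)^2)"
    using distributed_integrable[OF D', of "\<lambda>x. (x - m)^2"] integrable_normal_moment[OF s, of m 2] by simp
  have "variance Y = (sqrt v)^2" using normal_distributed_variance[OF s D'] .
  then have e2: "integral\<^sup>L M (\<lambda>\<omega>. (Y \<omega> - m)^2) = v" using e1 v by simp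
  show ?thesis using i1 e1 i2 e2 by simp
qed

definition mom2 :: "'a measure \<Rightarrow> ('a \<Rightarrow> real^'k) \<Rightarrow> real^'k \<Rightarrow> real^'k^'k \<Rightarrow> bool" where
  "mom2 M X m S \<longleftrightarrow> (\<forall>a. integrable M (\<lambda>\<omega>. a \<bullet> X \<omega>) \<and> integral\<^sup>L M (\<lambda>\<omega>. a \<bullet> X \<omega>) = a \<bullet> m) \<and>
     (\<forall>a b. integrable M (\<lambda>\<omega>. (a \<bullet> X \<omega> - a \<bullet> m) * (b \<bullet> X \<omega> - b \<bullet> m)) \<and>
       integral\<^sup>L M (\<lambda>\<omega>. (a \<bullet> X \<omega> - a \<bullet> m) * (b \<bullet> X \<omega> - b \<bullet> m)) = a \<bullet> (S *v b))"

lemma gauss_mom2: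
  fixes X :: "'a \<Rightarrow> real^'k"
  assumes P: "prob_space M" and G: "gaussian_vec M X m S" and sym: "transpose S = S"
    and psd: "\<And>a. a \<bullet> (S *v a) \<ge> 0"
  shows "mom2 M X m S"
proof -
  have Xm: "X \<in> borel_measurable M" using G unfolding gaussian_vec_def by simp
  have U: "integrable M (\<lambda>\<omega>. a \<bullet> X \<omega>) \<and> integral\<^sup>L M (\<lambda>\<omega>. a \<bullet> X \<omega>) = a \<bullet> m
     \<and> integrable M (\<lambda>\<omega>. (a \<bullet> X \<omega> - a \<bullet> m)^2) \<and> integral\<^sup>L M (\<lambda>\<omega>. (a \<bullet> X \<omega> - a \<bullet> m)^2) = a \<bullet> (S *v a)" for a
  proof (rule uni[OF P _ psd])
    show "(\<lambda>\<omega>. a \<bullet> X \<omega>) \<in> borel_measurable M" using Xm by measurable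
    show "if a \<bullet> (S *v a) = 0 then AE \<omega> in M. a \<bullet> X \<omega> = a \<bullet> m
      else distributed M lborel (\<lambda>\<omega>. a \<bullet> X \<omega>) (normal_density (a \<bullet> m) (sqrt (a \<bullet> (S *v a))))"
      using G unfolding gaussian_vec_def by blast
  qed
  have symS: "a \<bullet> (S *v b) = b \<bullet> (S *v a)" for a b
    by (metis dot_lmul_matrix inner_commute sym transpose_transpose vector_transpose_matrix)
  have prod: "(a \<bullet> X \<omega> - a \<bullet> m) * (b \<bullet> X \<omega> - b \<bullet> m) =
     ((((a + b) \<bullet> X \<omega> - (a + b) \<bullet> m)^2) - (a \<bullet> X \<omega> - a \<bullet> m)^2 - (b \<bullet> X \<omega> - b \<bullet> m)^2) / 2" for a b \<omega>
    by (simp add: inner_add_left power2_eq_square algebra_simps)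
  have B: "integrable M (\<lambda>\<omega>. (a \<bullet> X \<omega> - a \<bullet> m) * (b \<bullet> X \<omega> - b \<bullet> m)) \<and>
       integral\<^sup>L M (\<lambda>\<omega>. (a \<bullet> X \<omega> - a \<bullet> m) * (b \<bullet> X \<omega> - b \<bullet> m)) = a \<bullet> (S *v b)" for a b
  proof -
    have i: "integrable M (\<lambda>\<omega>. ((((a + b) \<bullet> X \<omega> - (a + b) \<bullet> m)^2) - (a \<bullet> X \<omega> - a \<bullet> m)^2 - (b \<bullet> X \<omega> - b \<bullet> m)^2) / 2)"
      using U[of "a+b"] U[of a] U[of b] by (intro integrable_divide Bochner_Integration.integrable_diff) auto
    have "integral\<^sup>L M (\<lambda>\<omega>. ((((a + b) \<bullet> X \<omega> - (a + b) \<bullet> m)^2) - (a \<bullet> X \<omega> - a \<bullet> m)^2 - (b \<bullet> X \<omega> - b \<bullet> m)^2) / 2)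
       = ((a+b) \<bullet> (S *v (a+b)) - a \<bullet> (S *v a) - b \<bullet> (S *v b)) / 2"
      using U[of "a+b"] U[of a] U[of b] by (simp add: Bochner_Integration.integral_diff)
    also have "\<dots> = a \<bullet> (S *v b)"
      using symS[of a b] by (simp add: matrix_vector_right_distrib inner_add_left inner_add_right)
    finally show ?thesis using i by (simp add: prod)
  qed
  show ?thesis unfolding mom2_def using U B by blast
qed



lemma diag_mult: 
  fixes X :: "real^'m^'m"
  shows "((\<chi> i j. if i = j then \<mu>$i else 0) ** X ** (\<chi> i j. if i = j then \<mu>$i else 0)) $ i $ j
     = \<mu>$i * X$i$j * \<mu>$j"
  by (simp add: matrix_matrix_mult_def if_distrib if_distribR sum.delta' cong: if_cong)

lemma diag_vec:
  "hadamard_vec x \<mu> = (\<chi> i j. if i = j then \<mu>$i else 0) *v x"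
  by (simp add: hadamard_vec_def matrix_vector_mult_def if_distrib if_distribR sum.delta' vec_eq_iff mult.commute cong: if_cong)

lemma matrix_add_rdistrib': "((B + C) ** A) = (B ** A) + (C ** A)"
  by (vector matrix_matrix_mult_def sum.distrib[symmetric] field_simps)

lemma sA: "(k *\<^sub>R A) ** B = k *\<^sub>R (A ** (B::real^'p^'n))"
  by (simp add: scalar_matrix_assoc)

lemma As: "A ** (k *\<^sub>R B) = k *\<^sub>R (A ** (B::real^'p^'n))"
  by (simp add: scalar_matrix_assoc matrix_scalar_ac)

lemma mat_part:
  fixes A :: "real^'m^'n" and R :: "real^'n^'n" and \<mu> :: "real^'m" and b :: real
  assumes spd: "spd R" and b: "b > 0"
  defines "Rinv \<equiv> matrix_inv R"
    and "D \<equiv> (\<chi> i j. if i = j then \<mu>$i else 0) :: real^'m^'m"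
  defines "H \<equiv> hadamard_mat (transpose A ** Rinv ** A) (outer \<mu> \<mu>)"
  defines "G \<equiv> H + (1 / b\<^sup>2) *\<^sub>R mat 1"
  defines "\<Sigma> \<equiv> matrix_inv G"
  defines "P \<equiv> \<Sigma> ** D ** transpose A ** Rinv"
    and "Q \<equiv> (1 / b\<^sup>2) *\<^sub>R \<Sigma>"
  shows "H = D ** (transpose A ** Rinv ** A) ** D"
    and "P ** R ** transpose P + Q ** (b\<^sup>2 *\<^sub>R mat 1) ** transpose Q = \<Sigma>"
proof -
  have Rs: "transpose R = R" and Rp: "\<And>x. x \<noteq> 0 \<Longrightarrow> x \<bullet> (R *v x) > 0"
    using spd unfolding spd_def by auto
  have Ri: "invertible R" using posdef_invertible Rp by blast
  have RRi: "R ** Rinv = mat 1" "Rinv ** R = mat 1" using minv[OF Ri] Rinv_def by auto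
  have Rinvs: "transpose Rinv = Rinv" using minv_sym[OF Ri Rs] Rinv_def by simp
  have Ds: "transpose D = D" by (simp add: D_def transpose_def vec_eq_iff)
  show HD: "H = D ** (transpose A ** Rinv ** A) ** D"
    by (simp add: H_def D_def hadamard_mat_def outer_def vec_eq_iff diag_mult[unfolded D_def] mult_ac)
  have Rinv_psd: "y \<bullet> (Rinv *v y) \<ge> 0" for y
  proof -
    define z where "z = Rinv *v y"
    have "y = R *v z" unfolding z_def by (simp add: matrix_vector_mul_assoc RRi)
    then have "y \<bullet> (Rinv *v y) = z \<bullet> (R *v z)" by (simp add: z_def inner_commute)
    then show ?thesis using Rp[of z] by (cases "z = 0") auto
  qed
  have Hpsd: "x \<bullet> (H *v x) \<ge> 0" for x
  proof -
    have "H = transpose (A ** D) ** Rinv ** (A ** D)"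
      using HD by (simp add: matrix_transpose_mul Ds matrix_mul_assoc)
    then have "x \<bullet> (H *v x) = x \<bullet> (transpose (A ** D) *v (Rinv *v ((A ** D) *v x)))"
      by (simp only: matrix_vector_mul_assoc matrix_mul_assoc)
    also have "\<dots> = ((A ** D) *v x) \<bullet> (Rinv *v ((A ** D) *v x))" by (rule dot_transpose)
    finally show ?thesis using Rinv_psd by simp
  qed
  have Gp: "x \<bullet> (G *v x) > 0" if "x \<noteq> 0" for x
  proof -
    have "x \<bullet> (G *v x) = x \<bullet> (H *v x) + (1 / b\<^sup>2) * (x \<bullet> x)"
      by (simp add: G_def matrix_vector_mult_add_rdistrib inner_add_right scaleR_matrix_vector_assoc[symmetric])
    moreover have "(1 / b\<^sup>2) * (x \<bullet> x) > 0" using that b by simp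
    ultimately show ?thesis using Hpsd[of x] by linarith
  qed
  have Gi: "invertible G" using posdef_invertible Gp by blast
  have Hs: "transpose H = H"
    using HD by (simp add: matrix_transpose_mul Ds Rinvs matrix_mul_assoc)
  have Gs: "transpose G = G"
  proof -
    have tadd: "transpose (X + Y) = transpose X + transpose Y" for X Y :: "real^'m^'m"
      by (simp add: transpose_def vec_eq_iff)
    show ?thesis by (simp only: G_def tadd Hs transpose_scalar transpose_mat)
  qed
  have Ss: "transpose \<Sigma> = \<Sigma>" using minv_sym[OF Gi Gs] \<Sigma>_def by simp
  have SG: "\<Sigma> ** G = mat 1" using minv[OF Gi] \<Sigma>_def by simp
  have tP: "transpose P = Rinv ** A ** D ** \<Sigma>"
    by (simp add: P_def matrix_transpose_mul Ds Rinvs Ss matrix_mul_assoc)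
  have "P ** R ** transpose P = \<Sigma> ** D ** transpose A ** (Rinv ** R) ** Rinv ** A ** D ** \<Sigma>"
    by (simp only: tP, simp add: P_def matrix_mul_assoc)
  also have "\<dots> = \<Sigma> ** H ** \<Sigma>"
    by (simp add: RRi HD matrix_mul_assoc)
  finally have 1: "P ** R ** transpose P = \<Sigma> ** H ** \<Sigma>" .
  have 2: "Q ** (b\<^sup>2 *\<^sub>R mat 1) ** transpose Q = (1 / b\<^sup>2) *\<^sub>R (\<Sigma> ** \<Sigma>)"
    apply (simp only: Q_def transpose_scalar Ss sA As matrix_mul_rid)
    using b by simp
  have "\<Sigma> = \<Sigma> ** G ** \<Sigma>" by (simp add: SG)
  also have "\<dots> = \<Sigma> ** H ** \<Sigma> + (1 / b\<^sup>2) *\<^sub>R (\<Sigma> ** \<Sigma>)"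
    by (simp only: G_def matrix_add_ldistrib matrix_add_rdistrib' sA As matrix_mul_rid)
  finally have 3: "\<Sigma> = \<Sigma> ** H ** \<Sigma> + (1 / b\<^sup>2) *\<^sub>R (\<Sigma> ** \<Sigma>)" .
  show "P ** R ** transpose P + Q ** (b\<^sup>2 *\<^sub>R mat 1) ** transpose Q = \<Sigma>"
    unfolding 1 2 using 3 by (rule sym)
qed



lemma indep_compose_gen:
  fixes X :: "'a \<Rightarrow> 'b::topological_space" and Y :: "'a \<Rightarrow> 'c::topological_space"
    and f :: "'b \<Rightarrow> real" and g :: "'c \<Rightarrow> real"
  assumes P: "prob_space M" and mX: "X \<in> borel_measurable M" and mY: "Y \<in> borel_measurable M"
    and ind: "distr M (borel \<Otimes>\<^sub>M borel) (\<lambda>\<omega>. (X \<omega>, Y \<omega>)) = distr M borel X \<Otimes>\<^sub>M distr M borel Y"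
    and mf: "f \<in> borel_measurable borel" and mg: "g \<in> borel_measurable borel"
  shows "prob_space.indep_var M borel (\<lambda>\<omega>. f (X \<omega>)) borel (\<lambda>\<omega>. g (Y \<omega>))"
proof -
  interpret prob_space M by fact
  have mfX: "(\<lambda>\<omega>. f (X \<omega>)) \<in> borel_measurable M" using measurable_compose[OF mX mf] .
  have mgY: "(\<lambda>\<omega>. g (Y \<omega>)) \<in> borel_measurable M" using measurable_compose[OF mY mg] .
  have ps: "prob_space (distr (distr M borel Y) borel g)"
    using distr_distr[OF mg mY] prob_space_distr[OF mgY] by (simp add: comp_def)
  then have sf: "sigma_finite_measure (distr (distr M borel Y) borel g)"
    by (rule prob_space_imp_sigma_finite)
  have mf': "f \<in> measurable (distr M borel X) borel" using mf by simp
  have mg': "g \<in> measurable (distr M borel Y) borel" using mg by simp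
  have "distr M borel (\<lambda>\<omega>. f (X \<omega>)) \<Otimes>\<^sub>M distr M borel (\<lambda>\<omega>. g (Y \<omega>))
      = distr (distr M borel X) borel f \<Otimes>\<^sub>M distr (distr M borel Y) borel g"
    using distr_distr[OF mf mX] distr_distr[OF mg mY] by (simp add: comp_def)
  also have "\<dots> = distr (distr M borel X \<Otimes>\<^sub>M distr M borel Y) (borel \<Otimes>\<^sub>M borel) (\<lambda>(x, y). (f x, g y))"
    by (rule pair_measure_distr[OF mf' mg' sf])
  also have "\<dots> = distr (distr M (borel \<Otimes>\<^sub>M borel) (\<lambda>\<omega>. (X \<omega>, Y \<omega>))) (borel \<Otimes>\<^sub>M borel) (\<lambda>(x, y). (f x, g y))"
    by (simp add: ind)
  also have "\<dots> = distr M (borel \<Otimes>\<^sub>M borel) (\<lambda>\<omega>. (f (X \<omega>), g (Y \<omega>)))"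
  proof -
    have m1: "(\<lambda>(x, y). (f x, g y)) \<in> measurable (borel \<Otimes>\<^sub>M borel) (borel \<Otimes>\<^sub>M borel)"
      using mf mg by measurable
    have m2: "(\<lambda>\<omega>. (X \<omega>, Y \<omega>)) \<in> measurable M (borel \<Otimes>\<^sub>M borel)"
      using mX mY by measurable
    show ?thesis using distr_distr[OF m1 m2] by (simp add: comp_def)
  qed
  finally show ?thesis
    using indep_var_distribution_eq mfX mgY by blast
qed



lemma main_aux:
  fixes M :: "'a measure"
    and A :: "real^'m^'n" and \<mu> :: "real^'m" and R :: "real^'n^'n" and b :: real
    and c :: "'a \<Rightarrow> real^'m" and \<epsilon> :: "'a \<Rightarrow> real^'n"
  assumes PS: "prob_space M"
    and spd: "spd R"
    and b: "b > 0"
    and Gc: "gaussian_vec M c 1 (b\<^sup>2 *\<^sub>R mat 1)"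
    and Ge: "gaussian_vec M \<epsilon> 0 R"
    and ind: "distr M (borel \<Otimes>\<^sub>M borel) (\<lambda>\<omega>. (c \<omega>, \<epsilon> \<omega>)) = distr M borel c \<Otimes>\<^sub>M distr M borel \<epsilon>"
  defines "\<Sigma> \<equiv> matrix_inv (hadamard_mat (transpose A ** matrix_inv R ** A) (outer \<mu> \<mu>)
                             + (1 / b\<^sup>2) *\<^sub>R mat 1)"
  defines "cM \<equiv> (\<lambda>\<omega>. \<Sigma> *v (hadamard_vec (transpose A *v (matrix_inv R *v (A *v \<mu> + \<epsilon> \<omega>))) \<mu>
                                  + (1 / b\<^sup>2) *\<^sub>R c \<omega>))"
  shows "cov_mat M cM = \<Sigma>"
proof -
  interpret prob_space M by fact
  define Rinv where "Rinv = matrix_inv R"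
  define D :: "real^'m^'m" where "D = (\<chi> i j. if i = j then \<mu>$i else 0)"
  define P where "P = \<Sigma> ** D ** transpose A ** Rinv"
  define Q where "Q = (1 / b\<^sup>2) *\<^sub>R \<Sigma>"
  define S where "S = (b\<^sup>2 *\<^sub>R mat 1 :: real^'m^'m)"
  define k where "k = \<Sigma> *v (hadamard_vec (transpose A *v (Rinv *v (A *v \<mu>))) \<mu>)"
  have MP: "P ** R ** transpose P + Q ** S ** transpose Q = \<Sigma>"
    using mat_part(2)[OF spd b, of A \<mu>] unfolding P_def Q_def \<Sigma>_def Rinv_def D_def S_def .
  have cMv: "cM \<omega> = k + P *v \<epsilon> \<omega> + Q *v c \<omega>" for \<omega>
    unfolding cM_def k_def P_def Q_def diag_vec D_def[symmetric] Rinv_def[symmetric]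
    by (simp add: matrix_vector_right_distrib matrix_vector_mul_assoc matrix_vector_mult_scaleR
        scaleR_matrix_vector_assoc matrix_mul_assoc add_ac del: transpose_matrix_vector)
  have cM_eq: "cM \<omega> $ i = k$i + row i P \<bullet> \<epsilon> \<omega> + row i Q \<bullet> c \<omega>" for \<omega> i
    by (simp add: cMv row_mult)
  have cm: "c \<in> borel_measurable M" using Gc unfolding gaussian_vec_def by simp
  have em: "\<epsilon> \<in> borel_measurable M" using Ge unfolding gaussian_vec_def by simp
  have Rs: "transpose R = R" and Rp: "\<And>x. x \<noteq> 0 \<Longrightarrow> x \<bullet> (R *v x) > 0"
    using spd unfolding spd_def by auto
  have me: "mom2 M \<epsilon> 0 R"
  proof (rule gauss_mom2[OF PS Ge Rs])
    fix a :: "real^'n" show "a \<bullet> (R *v a) \<ge> 0" using Rp[of a] by (cases "a = 0") auto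
  qed
  have mc: "mom2 M c 1 S"
  proof (rule gauss_mom2[OF PS Gc[folded S_def]])
    show "transpose S = S" by (simp add: S_def transpose_scalar)
    fix a :: "real^'m" show "a \<bullet> (S *v a) \<ge> 0"
      by (simp add: S_def scaleR_matrix_vector_assoc[symmetric])
  qed
  have e1: "integrable M (\<lambda>\<omega>. a \<bullet> \<epsilon> \<omega>)" "integral\<^sup>L M (\<lambda>\<omega>. a \<bullet> \<epsilon> \<omega>) = 0"
     "integrable M (\<lambda>\<omega>. (a \<bullet> \<epsilon> \<omega>) * (a' \<bullet> \<epsilon> \<omega>))"
     "integral\<^sup>L M (\<lambda>\<omega>. (a \<bullet> \<epsilon> \<omega>) * (a' \<bullet> \<epsilon> \<omega>)) = a \<bullet> (R *v a')" for a a'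
    using me unfolding mom2_def by auto
  have c1: "integrable M (\<lambda>\<omega>. a \<bullet> c \<omega>)" "integral\<^sup>L M (\<lambda>\<omega>. a \<bullet> c \<omega>) = a \<bullet> 1"
     "integrable M (\<lambda>\<omega>. (a \<bullet> c \<omega> - a \<bullet> 1) * (a' \<bullet> c \<omega> - a' \<bullet> 1))"
     "integral\<^sup>L M (\<lambda>\<omega>. (a \<bullet> c \<omega> - a \<bullet> 1) * (a' \<bullet> c \<omega> - a' \<bullet> 1)) = a \<bullet> (S *v a')" for a a'
    using mc unfolding mom2_def by auto
  have cross: "integrable M (\<lambda>\<omega>. (u \<bullet> c \<omega> - u \<bullet> 1) * (v \<bullet> \<epsilon> \<omega>)) \<and>
      integral\<^sup>L M (\<lambda>\<omega>. (u \<bullet> c \<omega> - u \<bullet> 1) * (v \<bullet> \<epsilon> \<omega>)) = 0" for u v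
  proof -
    have mu: "(\<lambda>x. u \<bullet> x - u \<bullet> 1) \<in> borel_measurable (borel :: (real^'m) measure)" by measurable
    have mv: "(\<lambda>x. v \<bullet> x) \<in> borel_measurable (borel :: (real^'n) measure)" by measurable
    have iv2: "indep_var (borel :: real measure) (\<lambda>\<omega>. u \<bullet> c \<omega> - u \<bullet> 1) (borel :: real measure) (\<lambda>\<omega>. v \<bullet> \<epsilon> \<omega>)"
      using indep_compose_gen[OF PS cm em ind mu mv] by simp
    have i1: "integrable M (\<lambda>\<omega>. u \<bullet> c \<omega> - u \<bullet> 1)" using c1(1)[of u] by simp
    show ?thesis
      using indep_var_lebesgue_integral[OF iv2 i1 e1(1)[of v]] indep_var_integrable[OF iv2 i1 e1(1)[of v]]
        e1(2)[of v] by simp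
  qed
  have mean: "mean_vec M cM $ i = k$i + row i Q \<bullet> 1" for i
  proof -
    have "mean_vec M cM $ i = integral\<^sup>L M (\<lambda>\<omega>. k$i + row i P \<bullet> \<epsilon> \<omega> + row i Q \<bullet> c \<omega>)"
      by (simp add: mean_vec_def cM_eq)
    also have "\<dots> = k$i + row i Q \<bullet> 1"
      using e1(1,2)[of "row i P"] c1(1,2)[of "row i Q"]
      by (simp add: Bochner_Integration.integral_add prob_space)
    finally show ?thesis .
  qed
  show ?thesis
  unfolding vec_eq_iff proof (intro allI)
    fix i j
    let ?Ei = "\<lambda>\<omega>. row i P \<bullet> \<epsilon> \<omega>" and ?Ej = "\<lambda>\<omega>. row j P \<bullet> \<epsilon> \<omega>"
    let ?Ci = "\<lambda>\<omega>. row i Q \<bullet> c \<omega> - row i Q \<bullet> 1" and ?Cj = "\<lambda>\<omega>. row j Q \<bullet> c \<omega> - row j Q \<bullet> 1"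
    have eq: "(cM \<omega> $ i - mean_vec M cM $ i) * (cM \<omega> $ j - mean_vec M cM $ j)
      = ((?Ei \<omega> * ?Ej \<omega> + ?Cj \<omega> * ?Ei \<omega>) + ?Ci \<omega> * ?Ej \<omega>) + ?Ci \<omega> * ?Cj \<omega>" for \<omega>
      by (simp add: cM_eq mean algebra_simps)
    have "cov_mat M cM $ i $ j = integral\<^sup>L M (\<lambda>\<omega>. ((?Ei \<omega> * ?Ej \<omega> + ?Cj \<omega> * ?Ei \<omega>) + ?Ci \<omega> * ?Ej \<omega>) + ?Ci \<omega> * ?Cj \<omega>)"
      by (simp add: cov_mat_def eq)
    also have "\<dots> = row i P \<bullet> (R *v row j P) + row i Q \<bullet> (S *v row j Q)"
      using e1(3,4)[of "row i P" "row j P"] cross[of "row j Q" "row i P"] cross[of "row i Q" "row j P"]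
        c1(3,4)[of "row i Q" "row j Q"]
      by (simp add: Bochner_Integration.integral_add)
    also have "\<dots> = \<Sigma> $ i $ j"
      using MP by (simp add: row_quad flip: MP)
    finally show "cov_mat M cM $ i $ j = \<Sigma> $ i $ j" .
  qed
qed


lemma cov_hadamard:
  fixes X :: "'a \<Rightarrow> real^'m"
  shows "cov_mat M (\<lambda>\<omega>. hadamard_vec (X \<omega>) \<mu>) = hadamard_mat (cov_mat M X) (outer \<mu> \<mu>)"
proof -
  have mean: "mean_vec M (\<lambda>\<omega>. hadamard_vec (X \<omega>) \<mu>) $ i = mean_vec M X $ i * \<mu>$i" for i
    by (simp add: mean_vec_def hadamard_vec_def)
  have eq: "(X \<omega> $ i * \<mu>$i - mean_vec M X $ i * \<mu>$i) * (X \<omega> $ j * \<mu>$j - mean_vec M X $ j * \<mu>$j)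
     = ((X \<omega> $ i - mean_vec M X $ i) * (X \<omega> $ j - mean_vec M X $ j)) * (\<mu>$i * \<mu>$j)" for \<omega> i j
    by (simp add: algebra_simps)
  have "cov_mat M (\<lambda>\<omega>. hadamard_vec (X \<omega>) \<mu>) $ i $ j = hadamard_mat (cov_mat M X) (outer \<mu> \<mu>) $ i $ j" for i j
  proof -
    have "cov_mat M (\<lambda>\<omega>. hadamard_vec (X \<omega>) \<mu>) $ i $ j = integral\<^sup>L M (\<lambda>\<omega>. 
       (X \<omega> $ i * \<mu>$i - mean_vec M X $ i * \<mu>$i) * (X \<omega> $ j * \<mu>$j - mean_vec M X $ j * \<mu>$j))"
      unfolding cov_mat_def mean by (simp add: hadamard_vec_def)
    also have "\<dots> = integral\<^sup>L M (\<lambda>\<omega>. ((X \<omega> $ i - mean_vec M X $ i) * (X \<omega> $ j - mean_vec M X $ j)) * (\<mu>$i * \<mu>$j))"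
      by (simp only: eq)
    also have "\<dots> = hadamard_mat (cov_mat M X) (outer \<mu> \<mu>) $ i $ j"
      by (simp add: hadamard_mat_def outer_def cov_mat_def)
    finally show ?thesis .
  qed
  then show ?thesis by (simp add: vec_eq_iff)
qed

theorem mainTheorem1:
  fixes M :: "'a measure"
    and A :: "real^'m^'n" and \<mu> :: "real^'m" and R :: "real^'n^'n" and b :: real
    and c :: "'a \<Rightarrow> real^'m" and \<epsilon> :: "'a \<Rightarrow> real^'n"
  assumes "prob_space M"
    and "spd R"
    and "b > 0"
    and "gaussian_vec M c 1 (b\<^sup>2 *\<^sub>R mat 1)"
    and "gaussian_vec M \<epsilon> 0 R"
    and "distr M (borel \<Otimes>\<^sub>M borel) (\<lambda>\<omega>. (c \<omega>, \<epsilon> \<omega>)) = distr M borel c \<Otimes>\<^sub>M distr M borel \<epsilon>"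
  shows "let \<Sigma> = matrix_inv (hadamard_mat (transpose A ** matrix_inv R ** A) (outer \<mu> \<mu>)
                             + (1 / b\<^sup>2) *\<^sub>R mat 1);
             y = (\<lambda>\<omega>. A *v \<mu> + \<epsilon> \<omega>);
             cMAP = (\<lambda>\<omega>. \<Sigma> *v (hadamard_vec (transpose A *v (matrix_inv R *v y \<omega>)) \<mu>
                                  + (1 / b\<^sup>2) *\<^sub>R c \<omega>));
             \<theta> = (\<lambda>\<omega>. hadamard_vec (cMAP \<omega>) \<mu>)
         in cov_mat M cMAP = \<Sigma> \<and> cov_mat M \<theta> = hadamard_mat \<Sigma> (outer \<mu> \<mu>)"
proof -
  have 1: "cov_mat M (\<lambda>\<omega>. matrix_inv (hadamard_mat (transpose A ** matrix_inv R ** A) (outer \<mu> \<mu>)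
                             + (1 / b\<^sup>2) *\<^sub>R mat 1) *v (hadamard_vec (transpose A *v (matrix_inv R *v (A *v \<mu> + \<epsilon> \<omega>))) \<mu>
                                  + (1 / b\<^sup>2) *\<^sub>R c \<omega>)) = matrix_inv (hadamard_mat (transpose A ** matrix_inv R ** A) (outer \<mu> \<mu>)
                             + (1 / b\<^sup>2) *\<^sub>R mat 1)"
    by (rule main_aux[OF assms])
  show ?thesis
    by (simp only: Let_def cov_hadamard 1 simp_thms)
qed

end
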